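(* Let $b(1)^2,\dots,b(N)^2$ be i.i.d. with $\mathbb P(b(i)^2\le\tau)=1-e^{-\tau/2}$, let $I$ be an index set of the $|I|$ smallest values of $b(i)^2$, with $1\le|I|<N$, $\sigma=|I|/N$, $\tau_*=-2\ln(1-\sigma)$, $\hat I=\{i:b(i)^2\le\tau_*\}$ and $\|\hat b\|^2=\sum_{i\in\hat I}b(i)^2$. Then for every $\epsilon>0$ and $\delta>0$, $$\frac{\|b_I\|^2}{|I|}\le\frac{\|\hat b\|^2}{|\hat I|}+\epsilon(\tau_*+\delta)$$ with probability at least $$1-2\exp\!\Big(-\tfrac12\delta^2e^{-\delta}(1-\sigma)^2N\Big)-2\exp\!\Big(-2\epsilon^2(1-\sigma)^2\frac{|I|^2}{N}\Big)$$ (with the convention $\|\hat b\|^2/|\hat I|=+\infty$ if $\hat I=\emptyset$).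
   Context: "$I$ is an index set of the $|I|$ smallest values" means $b(i)\le b(j)$ for all $i\in I$, $j\notin I$ (with $b(i)\ge0$); $\|b_I\|^2=\sum_{i\in I}b(i)^2$. *)

theory Defs
  imports "HOL-Probability.Probability"
begin

end

theory Submission imports Defs begin
lemma card_as_sum:
  "real (card {i. i < (N::nat) \<and> P i}) = (\<Sum>i<N. if P i then 1 else 0)"
proof -
  have "(\<Sum>i<N. if P i then 1 else (0::real)) = (\<Sum>i\<in>{i\<in>{..<N}. P i}. 1)"
    by (intro sum.mono_neutral_cong_right) auto
  thus ?thesis by simp
qed

lemma count_tail:
  fixes M :: "'a measure" and X :: "nat \<Rightarrow> 'a \<Rightarrow> real"
  assumes P: "prob_space M"
    and rv: "\<And>i. i < N \<Longrightarrow> X i \<in> borel_measurable M"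
    and indep: "prob_space.indep_vars M (\<lambda>_. borel) X {..<N}"
    and pr: "\<And>i. i < N \<Longrightarrow> measure M {\<omega> \<in> space M. X i \<omega> \<le> c} = p"
    and N: "N > 0" and t: "t \<ge> 0"
  shows "measure M {\<omega> \<in> space M. real (card {i. i < N \<and> X i \<omega> \<le> c}) \<le> real N * p - t}
          \<le> exp (-2 * t\<^sup>2 / real N)"
proof -
  interpret prob_space M by (rule P)
  define Y where "Y = (\<lambda>i \<omega>. if X i \<omega> \<le> c then 1 else (0::real))"
  interpret H: Hoeffding_ineq M "{..<N}" Y "\<lambda>_. 0" "\<lambda>_. 1" "\<Sum>i<N. expectation (Y i)"
  proof unfold_locales
    show "indep_vars (\<lambda>_. borel) Y {..<N}" unfolding Y_def
      by (rule indep_vars_compose2[OF indep]) auto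
  qed (auto simp: Y_def)
  have EY: "expectation (Y i) = p" if i: "i < N" for i
  proof -
    have "expectation (Y i) = expectation (indicator {\<omega> \<in> space M. X i \<omega> \<le> c})"
      by (rule Bochner_Integration.integral_cong) (auto simp: Y_def indicator_def)
    also have "\<dots> = measure M {\<omega> \<in> space M. X i \<omega> \<le> c}"
    proof -
      have "{\<omega> \<in> space M. X i \<omega> \<le> c} \<in> sets M" using rv[OF i] by measurable
      then show ?thesis by simp
    qed
    finally show ?thesis using pr[OF i] by simp
  qed
  have mu: "(\<Sum>i<N. expectation (Y i)) = real N * p" using EY by simp
  have "{\<omega> \<in> space M. real (card {i. i < N \<and> X i \<omega> \<le> c}) \<le> real N * p - t}
       = {\<omega> \<in> space M. (\<Sum>i\<in>{..<N}. Y i \<omega>) \<le> (\<Sum>i<N. expectation (Y i)) - t}"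
    unfolding mu by (simp add: card_as_sum Y_def)
  also have "measure M \<dots> \<le> exp (-2 * t\<^sup>2 / (\<Sum>i\<in>{..<N}. (1 - 0)\<^sup>2))"
    using N t by (intro H.Hoeffding_ineq_le) auto
  finally show ?thesis by simp
qed
lemma avg_subset:
  fixes f :: "nat \<Rightarrow> real"
  assumes fin: "finite H" and IH: "I \<subseteq> H" and ne: "I \<noteq> {}"
    and le: "\<forall>i\<in>I. \<forall>j\<in>H - I. f i \<le> f j"
  shows "sum f I / real (card I) \<le> sum f H / real (card H)"
proof -
  have finI: "finite I" using fin IH finite_subset by blast
  have cI: "card I > 0" using finI ne by auto
  have cH: "card H \<ge> card I" using fin IH card_mono by blast
  have cD: "card (H - I) = card H - card I" using finI IH card_Diff_subset by blast
  have "(\<Sum>i\<in>I. \<Sum>j\<in>H - I. f i) \<le> (\<Sum>i\<in>I. \<Sum>j\<in>H - I. f j)"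
    using le by (intro sum_mono) auto
  hence "real (card H - card I) * sum f I \<le> real (card I) * sum f (H - I)"
  proof -
    have "(\<Sum>i\<in>I. \<Sum>j\<in>H - I. f i) = real (card H - card I) * sum f I"
      by (simp add: cD sum_distrib_left)
    moreover have "(\<Sum>i\<in>I. \<Sum>j\<in>H - I. f j) = real (card I) * sum f (H - I)"
      by simp
    ultimately show ?thesis using \<open>(\<Sum>i\<in>I. \<Sum>j\<in>H - I. f i) \<le> _\<close> by simp
  qed
  hence "(real (card H) - real (card I)) * sum f I \<le> real (card I) * (sum f H - sum f I)"
    using cH fin IH by (simp add: of_nat_diff sum_diff)
  hence "sum f I * real (card H) \<le> sum f H * real (card I)"
    by (simp add: algebra_simps)
  moreover have "real (card I) > 0" "real (card H) > 0" using cI cH by auto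
  ultimately show ?thesis by (simp add: divide_simps)
qed

lemma deterministic:
  fixes f :: "nat \<Rightarrow> real"
  assumes IN: "I \<subseteq> {..<N}" and cI: "card I = k" and k: "1 \<le> k"
    and ord: "\<forall>i\<in>I. \<forall>j\<in>{..<N} - I. f i \<le> f j"
    and nn: "\<forall>i<N. f i \<ge> 0"
    and n: "real (card {i. i < N \<and> f i \<le> \<tau>}) > real k - \<epsilon> * real k"
    and m: "k \<le> card {i. i < N \<and> f i \<le> \<tau> + \<delta>}"
    and eps: "\<epsilon> > 0" and del: "\<delta> > 0" and tau: "\<tau> \<ge> 0"
  shows "(let Ih = {i. i < N \<and> f i \<le> \<tau>}
                 in Ih = {} \<or>
                    (\<Sum>i\<in>I. f i) / real k
                      \<le> (\<Sum>i\<in>Ih. f i) / real (card Ih) + \<epsilon> * (\<tau> + \<delta>))"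
proof -
  define H where "H = {i. i < N \<and> f i \<le> \<tau>}"
  have finH: "finite H" unfolding H_def by auto
  have finI: "finite I" using IN finite_subset by blast
  have Ine: "I \<noteq> {}" using cI k by auto
  have main: "H = {} \<or> sum f I / real k \<le> sum f H / real (card H) + \<epsilon> * (\<tau> + \<delta>)"
  proof (cases "H = {}")
    case True then show ?thesis by simp
  next
    case Hne: False
    have hpos: "card H > 0" using Hne finH by auto
    show ?thesis
    proof (cases "card H \<ge> k")
      case True
      have "I \<subseteq> H"
      proof
        fix i assume iI: "i \<in> I"
        show "i \<in> H"
        proof (rule ccontr)
          assume "i \<notin> H"
          hence fi: "f i > \<tau>" using iI IN unfolding H_def by auto
          have "H \<subseteq> I - {i}"
          proof
            fix j assume jH: "j \<in> H"
            hence "j < N" "f j \<le> \<tau>" unfolding H_def by auto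
            moreover have "j \<in> I"
            proof (rule ccontr)
              assume "j \<notin> I"
              hence "f i \<le> f j" using ord iI \<open>j < N\<close> by blast
              thus False using fi \<open>f j \<le> \<tau>\<close> by linarith
            qed
            ultimately show "j \<in> I - {i}" using fi by auto
          qed
          have "card H \<le> card (I - {i})" using finI by (intro card_mono) (auto simp: \<open>H \<subseteq> I - {i}\<close>)
          also have "\<dots> = k - 1" using iI cI finI by (simp add: card_Diff_singleton)
          finally have "card H \<le> k - 1" .
          thus False using True k by linarith
        qed
      qed
      moreover have "\<forall>i\<in>I. \<forall>j\<in>H - I. f i \<le> f j"
      proof (intro ballI)
        fix i j assume "i \<in> I" "j \<in> H - I"
        moreover have "H \<subseteq> {..<N}" unfolding H_def by auto
        ultimately show "f i \<le> f j" using ord by blast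
      qed
      ultimately have A: "sum f I / real (card I) \<le> sum f H / real (card H)"
        by (rule avg_subset[OF finH _ Ine])
      have B: "\<epsilon> * (\<tau> + \<delta>) \<ge> 0" using eps del tau by simp
      have "sum f I / real k \<le> sum f H / real (card H) + \<epsilon> * (\<tau> + \<delta>)"
        using A B unfolding cI by linarith
      thus ?thesis by (rule disjI2)
    next
      case False
      have HI: "H \<subseteq> I"
      proof
        fix j assume jH: "j \<in> H"
        show "j \<in> I"
        proof (rule ccontr)
          assume "j \<notin> I"
          have "I \<subseteq> H"
          proof
            fix i assume iI: "i \<in> I"
            have "j < N" "f j \<le> \<tau>" using jH unfolding H_def by auto
            hence "f i \<le> f j" using ord iI \<open>j \<notin> I\<close> by blast
            thus "i \<in> H" using iI IN \<open>f j \<le> \<tau>\<close> unfolding H_def by auto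
          qed
          hence "card I \<le> card H" using finH by (intro card_mono) auto
          thus False using False cI by simp
        qed
      qed
      have Ib: "f i \<le> \<tau> + \<delta>" if iI: "i \<in> I" for i
      proof (rule ccontr)
        assume fi: "\<not> f i \<le> \<tau> + \<delta>"
        have "{i. i < N \<and> f i \<le> \<tau> + \<delta>} \<subseteq> I - {i}"
        proof
          fix j assume "j \<in> {i. i < N \<and> f i \<le> \<tau> + \<delta>}"
          hence "j < N" "f j \<le> \<tau> + \<delta>" by auto
          moreover have "j \<in> I"
          proof (rule ccontr)
            assume "j \<notin> I"
            hence "f i \<le> f j" using ord iI \<open>j < N\<close> by blast
            thus False using fi \<open>f j \<le> \<tau> + \<delta>\<close> by linarith
          qed
          ultimately show "j \<in> I - {i}" using fi by auto
        qed
        hence "card {i. i < N \<and> f i \<le> \<tau> + \<delta>} \<le> card (I - {i})" using finI by (intro card_mono) auto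
        also have "\<dots> = k - 1" using iI cI finI by (simp add: card_Diff_singleton)
        finally have "card {i. i < N \<and> f i \<le> \<tau> + \<delta>} \<le> k - 1" .
        thus False using m k by linarith
      qed
      define h where "h = card H"
      have hk: "h \<le> k" using False h_def by simp
      have SH: "sum f H \<ge> 0" using nn unfolding H_def by (intro sum_nonneg) auto
      have "sum f I = sum f H + sum f (I - H)" using finI HI by (simp add: sum.subset_diff)
      also have "sum f (I - H) \<le> (\<Sum>i\<in>I - H. \<tau> + \<delta>)" using Ib by (intro sum_mono) auto
      also have "\<dots> = real (k - h) * (\<tau> + \<delta>)"
        using finI finH HI cI by (simp add: card_Diff_subset h_def)
      finally have S: "sum f I \<le> sum f H + real (k - h) * (\<tau> + \<delta>)" by simp
      have kpos: "real k > 0" using k by simp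
      have "sum f I / real k \<le> sum f H / real k + real (k - h) / real k * (\<tau> + \<delta>)"
        using S kpos by (simp add: divide_simps)
      also have "sum f H / real k \<le> sum f H / real h"
        using SH hk hpos h_def by (intro divide_left_mono) auto
      also have "real (k - h) / real k \<le> \<epsilon>"
      proof -
        have "real (k - h) = real k - real h" using hk by simp
        moreover have "real h > real k - \<epsilon> * real k" using n unfolding h_def H_def by simp
        ultimately have "real (k - h) \<le> \<epsilon> * real k" by linarith
        thus ?thesis using kpos by (simp add: pos_divide_le_eq)
      qed
      hence "real (k - h) / real k * (\<tau> + \<delta>) \<le> \<epsilon> * (\<tau> + \<delta>)"
        using tau del by (intro mult_right_mono) auto
      finally show ?thesis unfolding h_def by simp
    qed
  qed
  thus ?thesis by (simp add: Let_def H_def)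
qed
lemma let_as_ball:
  "Q {i. i < (N::nat) \<and> P i} \<longleftrightarrow> (\<forall>J\<in>Pow {..<N}. (\<forall>i\<in>{..<N}. i \<in> J \<longleftrightarrow> P i) \<longrightarrow> Q J)"
proof
  assume "Q {i. i < N \<and> P i}"
  show "\<forall>J\<in>Pow {..<N}. (\<forall>i\<in>{..<N}. i \<in> J \<longleftrightarrow> P i) \<longrightarrow> Q J"
  proof (intro ballI impI)
    fix J assume "J \<in> Pow {..<N}" "\<forall>i\<in>{..<N}. i \<in> J \<longleftrightarrow> P i"
    hence "J = {i. i < N \<and> P i}" by auto
    thus "Q J" using \<open>Q {i. i < N \<and> P i}\<close> by simp
  qed
next
  assume "\<forall>J\<in>Pow {..<N}. (\<forall>i\<in>{..<N}. i \<in> J \<longleftrightarrow> P i) \<longrightarrow> Q J"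
  moreover have "{i. i < N \<and> P i} \<in> Pow {..<N}" by auto
  ultimately show "Q {i. i < N \<and> P i}" by auto
qed

definition Phi :: "nat \<Rightarrow> nat \<Rightarrow> real \<Rightarrow> real \<Rightarrow> (nat \<Rightarrow> real) \<Rightarrow> bool" where
  "Phi N k t e f \<longleftrightarrow> (\<forall>I\<in>Pow {..<N}. card I = k \<longrightarrow> (\<forall>i\<in>I. \<forall>j\<in>{..<N}-I. f i \<le> f j) \<longrightarrow>
     (\<forall>J\<in>Pow {..<N}. (\<forall>i\<in>{..<N}. i\<in>J \<longleftrightarrow> f i \<le> t) \<longrightarrow> J = {} \<or>
        (\<Sum>i\<in>I. f i)/real k \<le> (\<Sum>i\<in>J. f i)/real(card J) + e))"

lemma Phi_mono:
  assumes eq: "\<And>i. i < N \<Longrightarrow> f i = g i" and P: "Phi N k t e f"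
  shows "Phi N k t e g"
  unfolding Phi_def
proof (intro ballI impI)
  fix I J assume I: "I \<in> Pow {..<N}" and cI: "card I = k"
    and og: "\<forall>i\<in>I. \<forall>j\<in>{..<N}-I. g i \<le> g j"
    and J: "J \<in> Pow {..<N}" and mg: "\<forall>i\<in>{..<N}. i\<in>J \<longleftrightarrow> g i \<le> t"
  have hI: "f i = g i" if "i \<in> I" for i using I that eq by auto
  have hJ: "f i = g i" if "i \<in> J" for i using J that eq by auto
  have of: "\<forall>i\<in>I. \<forall>j\<in>{..<N}-I. f i \<le> f j" using og hI eq by auto
  have mf: "\<forall>i\<in>{..<N}. i\<in>J \<longleftrightarrow> f i \<le> t" using mg eq by auto
  have "J = {} \<or> (\<Sum>i\<in>I. f i)/real k \<le> (\<Sum>i\<in>J. f i)/real(card J) + e"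
    using P I cI of J mf unfolding Phi_def by blast
  moreover have "(\<Sum>i\<in>I. f i) = (\<Sum>i\<in>I. g i)" by (rule sum.cong) (auto simp: hI)
  moreover have "(\<Sum>i\<in>J. f i) = (\<Sum>i\<in>J. g i)" by (rule sum.cong) (auto simp: hJ)
  ultimately show "J = {} \<or> (\<Sum>i\<in>I. g i)/real k \<le> (\<Sum>i\<in>J. g i)/real(card J) + e" by simp
qed

lemma Phi_meas:
  fixes M :: "'a measure" and X :: "nat \<Rightarrow> 'a \<Rightarrow> real"
  assumes rv: "\<And>i. i < N \<Longrightarrow> X i \<in> borel_measurable M"
  shows "{\<omega>\<in>space M. Phi N k t e (\<lambda>i. X i \<omega>)} \<in> sets M"
proof -
  define X' where "X' = (\<lambda>i. if i < N then X i else (\<lambda>_. 0::real))"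
  have [measurable]: "X' i \<in> borel_measurable M" for i using rv by (auto simp: X'_def)
  have "{\<omega>\<in>space M. Phi N k t e (\<lambda>i. X' i \<omega>)} \<in> sets M"
    unfolding Phi_def by measurable
  also have "{\<omega>\<in>space M. Phi N k t e (\<lambda>i. X' i \<omega>)} = {\<omega>\<in>space M. Phi N k t e (\<lambda>i. X i \<omega>)}"
  proof -
    have "Phi N k t e (\<lambda>i. X' i \<omega>) \<longleftrightarrow> Phi N k t e (\<lambda>i. X i \<omega>)" for \<omega>
      using Phi_mono[of N "\<lambda>i. X' i \<omega>" "\<lambda>i. X i \<omega>"] Phi_mono[of N "\<lambda>i. X i \<omega>" "\<lambda>i. X' i \<omega>"]
      by (auto simp: X'_def)
    thus ?thesis by simp
  qed
  finally show ?thesis .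
qed
lemma target_eq:
  fixes f :: "nat \<Rightarrow> real"
  shows "(\<forall>I. I \<subseteq> {..<N} \<longrightarrow> card I = k \<longrightarrow>
                (\<forall>i\<in>I. \<forall>j\<in>{..<N} - I. f i \<le> f j) \<longrightarrow>
                (let Ih = {i. i < N \<and> f i \<le> t}
                 in Ih = {} \<or>
                    (\<Sum>i\<in>I. f i) / real k
                      \<le> (\<Sum>i\<in>Ih. f i) / real (card Ih) + e)) \<longleftrightarrow> Phi N k t e f"
proof -
  have H: "(let Ih = {i. i < N \<and> f i \<le> t} in Ih = {} \<or>
           (\<Sum>i\<in>I. f i) / real k \<le> (\<Sum>i\<in>Ih. f i) / real (card Ih) + e)
        \<longleftrightarrow> (\<forall>J\<in>Pow {..<N}. (\<forall>i\<in>{..<N}. i\<in>J \<longleftrightarrow> f i \<le> t) \<longrightarrow> J = {} \<or>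
        (\<Sum>i\<in>I. f i)/real k \<le> (\<Sum>i\<in>J. f i)/real(card J) + e)" for I
    unfolding Let_def
    by (rule let_as_ball[where Q = "\<lambda>J. J = {} \<or> (\<Sum>i\<in>I. f i)/real k \<le> (\<Sum>i\<in>J. f i)/real(card J) + e"])
  show ?thesis unfolding Phi_def by (simp only: H Ball_def Pow_iff)
qed

lemma count_meas:
  fixes M :: "'a measure" and X :: "nat \<Rightarrow> 'a \<Rightarrow> real"
  assumes rv: "\<And>i. i < N \<Longrightarrow> X i \<in> borel_measurable M"
  shows "{\<omega> \<in> space M. real (card {i. i < N \<and> X i \<omega> \<le> c}) \<le> r} \<in> sets M"
proof -
  have [measurable]: "X i \<in> borel_measurable M" if "i \<in> {..<N}" for i using rv that by auto
  show ?thesis unfolding card_as_sum by measurable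
qed

theorem propositionA4:
  fixes M :: "'a measure" and X :: "nat \<Rightarrow> 'a \<Rightarrow> real"
    and N k :: nat and \<epsilon> \<delta> :: real
  assumes "prob_space M"
    and rv: "\<And>i. i < N \<Longrightarrow> X i \<in> borel_measurable M"
    and indep: "prob_space.indep_vars M (\<lambda>_. borel) X {..<N}"
    and cdf: "\<And>i t. i < N \<Longrightarrow> t \<ge> 0 \<Longrightarrow>
               measure M {\<omega> \<in> space M. X i \<omega> \<le> t} = 1 - exp (- t / 2)"
    and k: "1 \<le> k" "k < N"
    and eps: "\<epsilon> > 0" and del: "\<delta> > 0"
  shows
    "(let \<sigma> = real k / real N;
          \<tau> = - 2 * ln (1 - \<sigma>)
      in measure M {\<omega> \<in> space M.
            \<forall>I. I \<subseteq> {..<N} \<longrightarrow> card I = k \<longrightarrow>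
                (\<forall>i\<in>I. \<forall>j\<in>{..<N} - I. X i \<omega> \<le> X j \<omega>) \<longrightarrow>
                (let Ih = {i. i < N \<and> X i \<omega> \<le> \<tau>}
                 in Ih = {} \<or>
                    (\<Sum>i\<in>I. X i \<omega>) / real k
                      \<le> (\<Sum>i\<in>Ih. X i \<omega>) / real (card Ih) + \<epsilon> * (\<tau> + \<delta>))}
         \<ge> 1 - 2 * exp (- (1/2) * \<delta>^2 * exp (- \<delta>) * (1 - \<sigma>)^2 * real N)
              - 2 * exp (- 2 * \<epsilon>^2 * (1 - \<sigma>)^2 * (real k)^2 / real N))"
proof -
  interpret prob_space M by fact
  define s where "s = real k / real N"
  define t where "t = - 2 * ln (1 - s)"
  have Npos: "real N > 0" using k by simp
  have s01: "0 < s" "s < 1" using k by (auto simp: s_def field_simps)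
  have Ns: "real N * s = real k" using Npos by (simp add: s_def)
  have Nms: "real N * (1 - s) = real N - real k" using Ns by (simp add: algebra_simps)
  have et: "exp (- t / 2) = 1 - s" using s01 by (simp add: t_def)
  have t0: "t \<ge> 0" using s01 by (simp add: t_def ln_le_zero_iff)
  define a where "a = exp (- \<delta> / 2)"
  have a01: "0 < a" "a < 1" using del by (auto simp: a_def)
  have etd: "exp (- (t + \<delta>) / 2) = (1 - s) * a"
  proof -
    have "exp (- (t + \<delta>) / 2) = exp (- t / 2 + - \<delta> / 2)" by (rule arg_cong[where f=exp]) simp
    also have "\<dots> = exp (- t / 2) * exp (- \<delta> / 2)" by (rule exp_add)
    finally show ?thesis using et by (simp add: a_def)
  qed
  define q where "q = 1 - (1 - s) * a"
  define u where "u = (real N - real k) * (1 - a)"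
  have u0: "u \<ge> 0" using a01 k by (simp add: u_def)
  have Nqu: "real N * q - u = real k"
    unfolding q_def u_def using Nms by (simp add: algebra_simps)
  have pX: "measure M {\<omega> \<in> space M. X i \<omega> \<le> t} = s" if "i < N" for i
    using cdf[OF that t0] et by simp
  have qX: "measure M {\<omega> \<in> space M. X i \<omega> \<le> t + \<delta>} = q" if "i < N" for i
  proof -
    have "measure M {\<omega> \<in> space M. X i \<omega> \<le> t + \<delta>} = 1 - exp (- (t + \<delta>) / 2)"
      using cdf[OF that, of "t + \<delta>"] t0 del by linarith
    thus ?thesis unfolding etd q_def .
  qed
  have zX: "measure M {\<omega> \<in> space M. X i \<omega> \<le> 0} = 0" if "i < N" for i
    using cdf[OF that, of 0] by simp
  define B0 where "B0 = (\<Union>i\<in>{..<N}. {\<omega> \<in> space M. X i \<omega> \<le> 0})"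
  define B1 where "B1 = {\<omega> \<in> space M. real (card {i. i < N \<and> X i \<omega> \<le> t}) \<le> real N * s - \<epsilon> * real k}"
  define B2 where "B2 = {\<omega> \<in> space M. real (card {i. i < N \<and> X i \<omega> \<le> t + \<delta>}) \<le> real N * q - u}"
  have [measurable]: "X i \<in> borel_measurable M" if "i \<in> {..<N}" for i using rv that by auto
  have B0s: "B0 \<in> sets M" unfolding B0_def by measurable
  have B1s: "B1 \<in> sets M" unfolding B1_def by (rule count_meas[OF rv])
  have B2s: "B2 \<in> sets M" unfolding B2_def by (rule count_meas[OF rv])
  have PB0: "measure M B0 = 0"
  proof -
    have "measure M B0 \<le> (\<Sum>i\<in>{..<N}. measure M {\<omega> \<in> space M. X i \<omega> \<le> 0})"
      unfolding B0_def using rv by (intro finite_measure_subadditive_finite) auto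
    also have "\<dots> = 0" using zX by simp
    finally show ?thesis using measure_nonneg[of M B0] by linarith
  qed
  have PB1: "measure M B1 \<le> exp (- 2 * (\<epsilon> * real k)\<^sup>2 / real N)"
    unfolding B1_def using eps k
    by (intro count_tail[OF \<open>prob_space M\<close> rv indep pX]) auto
  have PB2: "measure M B2 \<le> exp (- 2 * u\<^sup>2 / real N)"
    unfolding B2_def using u0 k
    by (intro count_tail[OF \<open>prob_space M\<close> rv indep qX]) auto
  define T where "T = {\<omega> \<in> space M. Phi N k t (\<epsilon> * (t + \<delta>)) (\<lambda>i. X i \<omega>)}"
  have Ts: "T \<in> sets M" unfolding T_def by (rule Phi_meas[OF rv])
  have sub: "space M - (B0 \<union> B1 \<union> B2) \<subseteq> T"
  proof
    fix \<omega> assume w: "\<omega> \<in> space M - (B0 \<union> B1 \<union> B2)"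
    have nn: "\<forall>i<N. X i \<omega> \<ge> 0"
    proof (intro allI impI)
      fix i assume "i < N"
      hence "\<omega> \<notin> {\<omega> \<in> space M. X i \<omega> \<le> 0}" using w unfolding B0_def by blast
      thus "X i \<omega> \<ge> 0" using w by auto
    qed
    have n: "real (card {i. i < N \<and> X i \<omega> \<le> t}) > real k - \<epsilon> * real k"
      using w Ns unfolding B1_def by auto
    have m': "real (card {i. i < N \<and> X i \<omega> \<le> t + \<delta>}) > real k"
      using w Nqu unfolding B2_def by auto
    hence m: "k \<le> card {i. i < N \<and> X i \<omega> \<le> t + \<delta>}" by linarith
    have "\<forall>I. I \<subseteq> {..<N} \<longrightarrow> card I = k \<longrightarrow>
                (\<forall>i\<in>I. \<forall>j\<in>{..<N} - I. X i \<omega> \<le> X j \<omega>) \<longrightarrow>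
                (let Ih = {i. i < N \<and> X i \<omega> \<le> t}
                 in Ih = {} \<or>
                    (\<Sum>i\<in>I. X i \<omega>) / real k
                      \<le> (\<Sum>i\<in>Ih. X i \<omega>) / real (card Ih) + \<epsilon> * (t + \<delta>))"
      using deterministic[where f = "\<lambda>i. X i \<omega>", OF _ _ k(1) _ nn n m eps del t0] by blast
    hence "Phi N k t (\<epsilon> * (t + \<delta>)) (\<lambda>i. X i \<omega>)" by (simp only: target_eq)
    thus "\<omega> \<in> T" using w unfolding T_def by auto
  qed
  have C1: "measure M (space M - (B0 \<union> B1 \<union> B2)) = 1 - measure M (B0 \<union> B1 \<union> B2)"
    using B0s B1s B2s by (intro prob_compl) auto
  have C2: "measure M (B0 \<union> B1 \<union> B2) \<le> measure M B0 + measure M B1 + measure M B2"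
  proof -
    have "measure M (B0 \<union> B1 \<union> B2) \<le> measure M (B0 \<union> B1) + measure M B2"
      using B0s B1s B2s by (intro measure_subadditive) auto
    moreover have "measure M (B0 \<union> B1) \<le> measure M B0 + measure M B1"
      using B0s B1s by (intro measure_subadditive) auto
    ultimately show ?thesis by linarith
  qed
  have L: "measure M T \<ge> 1 - exp (- 2 * (\<epsilon> * real k)\<^sup>2 / real N) - exp (- 2 * u\<^sup>2 / real N)"
    using finite_measure_mono[OF sub Ts] PB0 PB1 PB2 C1 C2 by linarith
  have E1: "exp (- 2 * (\<epsilon> * real k)\<^sup>2 / real N) \<le> 2 * exp (- 2 * \<epsilon>^2 * (1 - s)^2 * (real k)^2 / real N)"
  proof -
    have "(1 - s)^2 \<le> 1" using s01 by (simp add: power_le_one)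
    hence "\<epsilon>^2 * (1 - s)^2 * (real k)^2 \<le> \<epsilon>^2 * (real k)^2"
      by (intro mult_right_mono) (auto simp: mult_left_le)
    hence "- 2 * (\<epsilon> * real k)\<^sup>2 / real N \<le> - 2 * \<epsilon>^2 * (1 - s)^2 * (real k)^2 / real N"
      using Npos by (simp add: divide_simps power_mult_distrib)
    hence "exp (- 2 * (\<epsilon> * real k)\<^sup>2 / real N) \<le> exp (- 2 * \<epsilon>^2 * (1 - s)^2 * (real k)^2 / real N)"
      by (simp only: exp_le_cancel_iff)
    thus ?thesis using exp_gt_zero by (smt (verit))
  qed
  have E2: "exp (- 2 * u\<^sup>2 / real N) \<le> 2 * exp (- (1/2) * \<delta>^2 * exp (- \<delta>) * (1 - s)^2 * real N)"
  proof -
    have ea: "exp (- \<delta>) = a^2" by (simp add: a_def flip: exp_of_nat_mult)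
    have "1 + \<delta>/2 \<le> exp (\<delta>/2)" by (rule exp_ge_add_one_self)
    hence "a * (1 + \<delta>/2) \<le> a * exp (\<delta>/2)" using a01 by simp
    also have "a * exp (\<delta>/2) = 1" by (simp add: a_def flip: exp_add)
    finally have "(\<delta>/2) * a \<le> 1 - a" by (simp add: algebra_simps)
    hence "((\<delta>/2) * a)^2 \<le> (1 - a)^2" using a01 del by (intro power_mono) auto
    hence K: "(1/2) * \<delta>^2 * a^2 \<le> 2 * (1 - a)^2" by (simp add: power_mult_distrib power_divide)
    have uN: "u^2 / real N = (1 - s)^2 * real N * (1 - a)^2"
      using Npos Nms unfolding u_def by (simp add: power2_eq_square field_simps)
    have "(1/2) * \<delta>^2 * exp (- \<delta>) * (1 - s)^2 * real N \<le> 2 * u^2 / real N"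
    proof -
      have K2: "(1/2) * \<delta>^2 * a^2 * ((1 - s)^2 * real N) \<le> 2 * (1 - a)^2 * ((1 - s)^2 * real N)"
        by (rule mult_right_mono[OF K]) simp
      have e1: "(1/2) * \<delta>^2 * exp (- \<delta>) * (1 - s)^2 * real N = (1/2) * \<delta>^2 * a^2 * ((1 - s)^2 * real N)"
        unfolding ea by (simp add: algebra_simps)
      have e2: "2 * u^2 / real N = 2 * (1 - a)^2 * ((1 - s)^2 * real N)"
      proof -
        have "2 * u^2 / real N = 2 * (u^2 / real N)" by simp
        also have "\<dots> = 2 * (1 - a)^2 * ((1 - s)^2 * real N)" unfolding uN by (simp add: algebra_simps)
        finally show ?thesis .
      qed
      show ?thesis unfolding e1 e2 by (rule K2)
    qed
    hence "exp (- 2 * u\<^sup>2 / real N) \<le> exp (- (1/2) * \<delta>^2 * exp (- \<delta>) * (1 - s)^2 * real N)"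
      by (simp only: exp_le_cancel_iff)
    thus ?thesis using exp_gt_zero by (smt (verit))
  qed
  have G: "measure M {\<omega> \<in> space M.
            \<forall>I. I \<subseteq> {..<N} \<longrightarrow> card I = k \<longrightarrow>
                (\<forall>i\<in>I. \<forall>j\<in>{..<N} - I. X i \<omega> \<le> X j \<omega>) \<longrightarrow>
                (let Ih = {i. i < N \<and> X i \<omega> \<le> t}
                 in Ih = {} \<or>
                    (\<Sum>i\<in>I. X i \<omega>) / real k
                      \<le> (\<Sum>i\<in>Ih. X i \<omega>) / real (card Ih) + \<epsilon> * (t + \<delta>))}
         \<ge> 1 - 2 * exp (- (1/2) * \<delta>^2 * exp (- \<delta>) * (1 - s)^2 * real N)
              - 2 * exp (- 2 * \<epsilon>^2 * (1 - s)^2 * (real k)^2 / real N)"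
  proof -
    have "{\<omega> \<in> space M.
            \<forall>I. I \<subseteq> {..<N} \<longrightarrow> card I = k \<longrightarrow>
                (\<forall>i\<in>I. \<forall>j\<in>{..<N} - I. X i \<omega> \<le> X j \<omega>) \<longrightarrow>
                (let Ih = {i. i < N \<and> X i \<omega> \<le> t}
                 in Ih = {} \<or>
                    (\<Sum>i\<in>I. X i \<omega>) / real k
                      \<le> (\<Sum>i\<in>Ih. X i \<omega>) / real (card Ih) + \<epsilon> * (t + \<delta>))} = T"
      (is "?S = T") unfolding T_def by (simp only: target_eq)
    hence "measure M ?S = measure M T" by simp
    thus ?thesis using L E1 E2 by linarith
  qed
  from G show ?thesis unfolding Let_def s_def t_def .
qed
end
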